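(* Let $\mathbf{K}$ be a $\mu$-AEC and let $\mathbf{K}^+$ be its substructure functorial expansion. If $M^+, N^+ \in \mathbf{K}^+$ are such that $M^+$ is a $\tau(\mathbf{K}^+)$-substructure of $N^+$, then $M^+ \le_{\mathbf{K}^+} N^+$.
   Context: Let $\mu$ be regular. A $\mu$-ary abstract class is a pair $\mathbf{K} = (K, \le_{\mathbf{K}})$ where $K$ is a class of structures in a fixed vocabulary $\tau(\mathbf{K})$ whose symbols have arity $<\mu$, and $\le_{\mathbf{K}}$ is a partial order on $K$ respecting isomorphisms and extending the substructure relation; $UM$ denotes the universe of $M$. It is a $\mu$-AEC if: (coherence) $M_0 \subseteq M_1 \le_{\mathbf{K}} M_2$ and $M_0 \le_{\mathbf{K}} M_2$ imply $M_0 \le_{\mathbf{K}} M_1$; (chain axioms) for every $\mu$-directed system $\langle M_i : i\in I\rangle$ in $\mathbf{K}$ (i.e. $I$ is a poset in which every subset of size $<\mu$ has an upper bound and $i\le j$ implies $M_i \le_{\mathbf{K}} M_j$), $M := \bigcup_i M_i \in K$, $M_i \le_{\mathbf{K}} M$ for all $i$, and if $M_i \le_{\mathbf{K}} N$ for all $i$ then $M \le_{\mathbf{K}} N$; (LST axiom) there is a cardinal $\lambda = \lambda^{<\mu} \ge |\tau(\mathbf{K})| + \mu$ such that for every $M \in K$ and $A \subseteq UM$ there is $M_0 \le_{\mathbf{K}} M$ with $A \subseteq UM_0$ and $|UM_0| \le |A|^{<\mu} + \lambda$; $\mathrm{LS}(\mathbf{K})$ is the least such $\lambda$. The substructure functorial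 expansion $\mathbf{K}^+$ of $\mathbf{K}$: $\tau(\mathbf{K}^+) = \tau(\mathbf{K}) \cup \{P\}$ with $P$ a new $\mathrm{LS}(\mathbf{K})$-ary predicate; $M^+ \in \mathbf{K}^+$ iff $M^+ \upharpoonright \tau(\mathbf{K}) \in \mathbf{K}$ and for every $\bar a \in {}^{\mathrm{LS}(\mathbf{K})}(UM^+)$, $P^{M^+}(\bar a)$ holds iff $\mathrm{ran}(\bar a)$, viewed as a $\tau(\mathbf{K})$-structure (substructure of $M^+\upharpoonright\tau(\mathbf{K})$), satisfies $\mathrm{ran}(\bar a) \le_{\mathbf{K}} M^+ \upharpoonright \tau(\mathbf{K})$; and $M^+ \le_{\mathbf{K}^+} N^+$ iff $M^+ \upharpoonright \tau(\mathbf{K}) \le_{\mathbf{K}} N^+ \upharpoonright \tau(\mathbf{K})$. *)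

theory Defs
  imports Main "HOL-Library.FuncSet"
begin

unbundle cardinal_syntax

text \<open>A vocabulary: relation symbols, function symbols (constants = 0-ary function
symbols) and an arity for each symbol, given as a set of argument positions
(of type 'i).\<close>

record ('s, 'i) vocab =
  RS :: "'s set"
  FS :: "'s set"
  ar :: "'s \<Rightarrow> 'i set"

record ('a, 's, 'i) struc =
  univ :: "'a set"
  rel  :: "'s \<Rightarrow> ('i \<Rightarrow> 'a) set"
  fn   :: "'s \<Rightarrow> ('i \<Rightarrow> 'a) \<Rightarrow> 'a"

definition tuples :: "('s, 'i) vocab \<Rightarrow> 's \<Rightarrow> 'a set \<Rightarrow> ('i \<Rightarrow> 'a) set" where
  "tuples V s U = ar V s \<rightarrow>\<^sub>E U"

text \<open>Well-formed tau-structure (universes nonempty, as usual in model theory;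
values outside the vocabulary are normalised so that structures are determined
by their tau-content).\<close>
definition wf_struc :: "('s, 'i) vocab \<Rightarrow> ('a, 's, 'i) struc \<Rightarrow> bool" where
  "wf_struc V M \<longleftrightarrow>
     univ M \<noteq> {} \<and>
     (\<forall>s. rel M s \<subseteq> tuples V s (univ M)) \<and>
     (\<forall>s. s \<notin> RS V \<longrightarrow> rel M s = {}) \<and>
     (\<forall>s \<in> FS V. \<forall>x \<in> tuples V s (univ M). fn M s x \<in> univ M) \<and>
     (\<forall>s x. \<not> (s \<in> FS V \<and> x \<in> tuples V s (univ M)) \<longrightarrow> fn M s x = undefined)"

definition substr :: "('s, 'i) vocab \<Rightarrow> ('a, 's, 'i) struc \<Rightarrow> ('a, 's, 'i) struc \<Rightarrow> bool" where
  "substr V M N \<longleftrightarrow> wf_struc V M \<and> wf_struc V N \<and> univ M \<subseteq> univ N \<and>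
     (\<forall>s. rel M s = rel N s \<inter> tuples V s (univ M)) \<and>
     (\<forall>s \<in> FS V. \<forall>x \<in> tuples V s (univ M). fn M s x = fn N s x)"

text \<open>The subset A of the universe of M viewed as a tau-structure (it is a
substructure of M iff A is nonempty and closed under the functions).\<close>
definition restr :: "('s, 'i) vocab \<Rightarrow> ('a, 's, 'i) struc \<Rightarrow> 'a set \<Rightarrow> ('a, 's, 'i) struc" where
  "restr V M A = \<lparr> univ = A,
     rel = (\<lambda>s. rel M s \<inter> tuples V s A),
     fn = (\<lambda>s x. if s \<in> FS V \<and> x \<in> tuples V s A then fn M s x else undefined) \<rparr>"

definition iso :: "('s, 'i) vocab \<Rightarrow> ('a \<Rightarrow> 'a) \<Rightarrow> ('a, 's, 'i) struc \<Rightarrow> ('a, 's, 'i) struc \<Rightarrow> bool" where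
  "iso V f M N \<longleftrightarrow> wf_struc V M \<and> wf_struc V N \<and> bij_betw f (univ M) (univ N) \<and>
     (\<forall>s. \<forall>x \<in> tuples V s (univ M).
        (s \<in> RS V \<longrightarrow> (x \<in> rel M s \<longleftrightarrow> restrict (f \<circ> x) (ar V s) \<in> rel N s)) \<and>
        (s \<in> FS V \<longrightarrow> f (fn M s x) = fn N s (restrict (f \<circ> x) (ar V s))))"

definition regular_infinite :: "'m rel \<Rightarrow> bool" where
  "regular_infinite mu \<longleftrightarrow> Card_order mu \<and> infinite (Field mu) \<and> regularCard mu"

definition mu_ary_abstract_class ::
  "('s, 'i) vocab \<Rightarrow> 'm rel \<Rightarrow> ('a, 's, 'i) struc set \<Rightarrow>
   (('a, 's, 'i) struc \<Rightarrow> ('a, 's, 'i) struc \<Rightarrow> bool) \<Rightarrow> bool" where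
  "mu_ary_abstract_class V mu K le \<longleftrightarrow>
     RS V \<inter> FS V = {} \<and>
     (\<forall>s \<in> RS V \<union> FS V. |ar V s| <o mu) \<and>
     (\<forall>M \<in> K. wf_struc V M) \<and>
     (\<forall>M N. le M N \<longrightarrow> M \<in> K \<and> N \<in> K) \<and>
     (\<forall>M \<in> K. le M M) \<and>
     (\<forall>M N P. le M N \<longrightarrow> le N P \<longrightarrow> le M P) \<and>
     (\<forall>M N. le M N \<longrightarrow> le N M \<longrightarrow> M = N) \<and>
     (\<forall>M N. le M N \<longrightarrow> substr V M N) \<and>
     (\<forall>f M N. M \<in> K \<longrightarrow> iso V f M N \<longrightarrow> N \<in> K) \<and>
     (\<forall>f M1 M2 N1 N2. le M1 M2 \<longrightarrow> iso V f M1 N1 \<longrightarrow> iso V f M2 N2 \<longrightarrow> le N1 N2)"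

definition coherence ::
  "('s, 'i) vocab \<Rightarrow> ('a, 's, 'i) struc set \<Rightarrow>
   (('a, 's, 'i) struc \<Rightarrow> ('a, 's, 'i) struc \<Rightarrow> bool) \<Rightarrow> bool" where
  "coherence V K le \<longleftrightarrow>
     (\<forall>M0 M1 M2. M0 \<in> K \<longrightarrow> M1 \<in> K \<longrightarrow> substr V M0 M1 \<longrightarrow> le M1 M2 \<longrightarrow> le M0 M2 \<longrightarrow> le M0 M1)"

definition mu_directed :: "'m rel \<Rightarrow> 'x set \<Rightarrow> ('x \<Rightarrow> 'x \<Rightarrow> bool) \<Rightarrow> bool" where
  "mu_directed mu I ord \<longleftrightarrow>
     (\<forall>i \<in> I. ord i i) \<and>
     (\<forall>i \<in> I. \<forall>j \<in> I. \<forall>k \<in> I. ord i j \<longrightarrow> ord j k \<longrightarrow> ord i k) \<and>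
     (\<forall>i \<in> I. \<forall>j \<in> I. ord i j \<longrightarrow> ord j i \<longrightarrow> i = j) \<and>
     (\<forall>X \<subseteq> I. |X| <o mu \<longrightarrow> (\<exists>j \<in> I. \<forall>i \<in> X. ord i j))"

definition directed_system ::
  "'m rel \<Rightarrow> ('a, 's, 'i) struc set \<Rightarrow> (('a, 's, 'i) struc \<Rightarrow> ('a, 's, 'i) struc \<Rightarrow> bool) \<Rightarrow>
   'x set \<Rightarrow> ('x \<Rightarrow> 'x \<Rightarrow> bool) \<Rightarrow> ('x \<Rightarrow> ('a, 's, 'i) struc) \<Rightarrow> bool" where
  "directed_system mu K le I ord Ms \<longleftrightarrow>
     mu_directed mu I ord \<and> (\<forall>i \<in> I. Ms i \<in> K) \<and>
     (\<forall>i \<in> I. \<forall>j \<in> I. ord i j \<longrightarrow> le (Ms i) (Ms j))"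

text \<open>M is the union of the system: its universe is the union of the universes
and every member is a substructure of it (this determines M).\<close>
definition is_union ::
  "('s, 'i) vocab \<Rightarrow> 'x set \<Rightarrow> ('x \<Rightarrow> ('a, 's, 'i) struc) \<Rightarrow> ('a, 's, 'i) struc \<Rightarrow> bool" where
  "is_union V I Ms M \<longleftrightarrow> wf_struc V M \<and> univ M = (\<Union>i \<in> I. univ (Ms i)) \<and>
     (\<forall>i \<in> I. substr V (Ms i) M)"

text \<open>Chain axioms.  Index posets are taken inside the type of structures; this
is no loss since any directed system can be reindexed by its set of members
ordered by le.\<close>
definition chain_axioms ::
  "('s, 'i) vocab \<Rightarrow> 'm rel \<Rightarrow> ('a, 's, 'i) struc set \<Rightarrow>
   (('a, 's, 'i) struc \<Rightarrow> ('a, 's, 'i) struc \<Rightarrow> bool) \<Rightarrow> bool" where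
  "chain_axioms V mu K le \<longleftrightarrow>
     (\<forall>(I :: ('a, 's, 'i) struc set) ord Ms. directed_system mu K le I ord Ms \<longrightarrow>
        (\<forall>M. is_union V I Ms M \<longrightarrow>
           M \<in> K \<and> (\<forall>i \<in> I. le (Ms i) M) \<and>
           (\<forall>N. (\<forall>i \<in> I. le (Ms i) N) \<longrightarrow> le M N)))"

text \<open>The set of sequences of length < mu from A (sequences indexed by the
initial segments of the well-order mu); its cardinality is |A|^{<mu}
(up to a summand mu, which is irrelevant below since lambda \<ge> mu).\<close>
definition seqs_lt :: "'m rel \<Rightarrow> 'a set \<Rightarrow> ('m \<times> ('m \<Rightarrow> 'a)) set" where
  "seqs_lt mu A = {(\<alpha>, f). \<alpha> \<in> Field mu \<and> f \<in> Order_Relation.underS mu \<alpha> \<rightarrow>\<^sub>E A}"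

definition LST_cardinal ::
  "('s, 'i) vocab \<Rightarrow> 'm rel \<Rightarrow> ('a, 's, 'i) struc set \<Rightarrow>
   (('a, 's, 'i) struc \<Rightarrow> ('a, 's, 'i) struc \<Rightarrow> bool) \<Rightarrow> 'c rel \<Rightarrow> bool" where
  "LST_cardinal V mu K le lam \<longleftrightarrow>
     Card_order lam \<and>
     |seqs_lt mu (Field lam)| =o lam \<and>
     |RS V \<union> FS V| +c mu \<le>o lam \<and>
     (\<forall>M \<in> K. \<forall>A \<subseteq> univ M. \<exists>M0. le M0 M \<and> A \<subseteq> univ M0 \<and>
        |univ M0| \<le>o |seqs_lt mu A| +c lam)"

text \<open>lam is LS(K): the least cardinal satisfying the LST axiom.  (Every cardinal
below lam is represented on the type of lam, so minimality within that type is
global minimality.)\<close>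
definition is_LS :: 
  "('s, 'i) vocab \<Rightarrow> 'm rel \<Rightarrow> ('a, 's, 'i) struc set \<Rightarrow>
   (('a, 's, 'i) struc \<Rightarrow> ('a, 's, 'i) struc \<Rightarrow> bool) \<Rightarrow> 'c rel \<Rightarrow> bool" where
  "is_LS V mu K le lam \<longleftrightarrow> LST_cardinal V mu K le lam \<and>
     (\<forall>lam' :: 'c rel. LST_cardinal V mu K le lam' \<longrightarrow> lam \<le>o lam')"

definition mu_AEC ::
  "('s, 'i) vocab \<Rightarrow> 'm rel \<Rightarrow> ('a, 's, 'i) struc set \<Rightarrow>
   (('a, 's, 'i) struc \<Rightarrow> ('a, 's, 'i) struc \<Rightarrow> bool) \<Rightarrow> 'c rel \<Rightarrow> bool" where
  "mu_AEC V mu K le lam \<longleftrightarrow> regular_infinite mu \<and> mu_ary_abstract_class V mu K le \<and>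
     coherence V K le \<and> chain_axioms V mu K le \<and> is_LS V mu K le lam"

text \<open>A tau(K+)-structure is a pair (M, P) of a tau(K)-structure M and the
interpretation P of the new LS(K)-ary predicate: a set of sequences of length
LS(K) (indexed by Field lam) from the universe of M.\<close>
type_synonym ('a, 's, 'i, 'c) pstruc = "('a, 's, 'i) struc \<times> ('c \<Rightarrow> 'a) set"

definition Kplus ::
  "('s, 'i) vocab \<Rightarrow> ('a, 's, 'i) struc set \<Rightarrow>
   (('a, 's, 'i) struc \<Rightarrow> ('a, 's, 'i) struc \<Rightarrow> bool) \<Rightarrow> 'c rel \<Rightarrow> ('a, 's, 'i, 'c) pstruc set" where
  "Kplus V K le lam = {(M, P). M \<in> K \<and>
     P = {a \<in> Field lam \<rightarrow>\<^sub>E univ M. le (restr V M (a ` Field lam)) M}}"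

definition le_plus ::
  "('s, 'i) vocab \<Rightarrow> ('a, 's, 'i) struc set \<Rightarrow>
   (('a, 's, 'i) struc \<Rightarrow> ('a, 's, 'i) struc \<Rightarrow> bool) \<Rightarrow> 'c rel \<Rightarrow>
   ('a, 's, 'i, 'c) pstruc \<Rightarrow> ('a, 's, 'i, 'c) pstruc \<Rightarrow> bool" where
  "le_plus V K le lam Mp Np \<longleftrightarrow> Mp \<in> Kplus V K le lam \<and> Np \<in> Kplus V K le lam \<and> le (fst Mp) (fst Np)"

definition substr_plus ::
  "('s, 'i) vocab \<Rightarrow> 'c rel \<Rightarrow> ('a, 's, 'i, 'c) pstruc \<Rightarrow> ('a, 's, 'i, 'c) pstruc \<Rightarrow> bool" where
  "substr_plus V lam Mp Np \<longleftrightarrow> substr V (fst Mp) (fst Np) \<and>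
     snd Mp = snd Np \<inter> (Field lam \<rightarrow>\<^sub>E univ (fst Mp))"

end

theory Submission
  imports Defs "HOL-Library.FuncSet"
begin


lemma tuples_mono: "A \<subseteq> B \<Longrightarrow> tuples V s A \<subseteq> tuples V s B"
  unfolding tuples_def by (auto simp: PiE_def Pi_def)

lemma substr_restr:
  assumes "substr V i M" shows "restr V M (univ i) = i"
proof -
  have w: "wf_struc V i" and r: "\<forall>s. rel i s = rel M s \<inter> tuples V s (univ i)"
    and f: "\<forall>s \<in> FS V. \<forall>x \<in> tuples V s (univ i). fn i s x = fn M s x"
    using assms unfolding substr_def by auto
  have u: "\<forall>s x. \<not> (s \<in> FS V \<and> x \<in> tuples V s (univ i)) \<longrightarrow> fn i s x = undefined"
    using w unfolding wf_struc_def by blast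
  have "rel i = (\<lambda>s. rel M s \<inter> tuples V s (univ i))" using r by blast
  moreover have "fn i = (\<lambda>s x. if s \<in> FS V \<and> x \<in> tuples V s (univ i) then fn M s x else undefined)"
    using u f by (intro ext) (metis (full_types))
  ultimately show ?thesis unfolding restr_def by (cases i) simp
qed

lemma restr_substr_eq:
  assumes s: "substr V M N" and A: "A \<subseteq> univ M" shows "restr V N A = restr V M A"
proof -
  have t: "\<And>s. tuples V s A \<subseteq> tuples V s (univ M)" by (rule tuples_mono[OF A])
  have r: "\<forall>s. rel M s = rel N s \<inter> tuples V s (univ M)"
    and f: "\<forall>s \<in> FS V. \<forall>x \<in> tuples V s (univ M). fn M s x = fn N s x"
    using s unfolding substr_def by auto
  have "(\<lambda>s. rel N s \<inter> tuples V s A) = (\<lambda>s. rel M s \<inter> tuples V s A)"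
    using r t by blast
  moreover have "(\<lambda>s x. if s \<in> FS V \<and> x \<in> tuples V s A then fn N s x else undefined)
     = (\<lambda>s x. if s \<in> FS V \<and> x \<in> tuples V s A then fn M s x else undefined)"
    using f t by (intro ext) (auto simp: subset_iff)
  ultimately show ?thesis unfolding restr_def by simp
qed

lemma substr_between:
  assumes a: "substr V i M" "substr V j M" and u: "univ i \<subseteq> univ j" shows "substr V i j"
proof -
  have t: "\<And>s. tuples V s (univ i) \<subseteq> tuples V s (univ j)" by (rule tuples_mono[OF u])
  have r1: "\<forall>s. rel i s = rel M s \<inter> tuples V s (univ i)"
    and f1: "\<forall>s \<in> FS V. \<forall>x \<in> tuples V s (univ i). fn i s x = fn M s x"
    and r2: "\<forall>s. rel j s = rel M s \<inter> tuples V s (univ j)"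
    and f2: "\<forall>s \<in> FS V. \<forall>x \<in> tuples V s (univ j). fn j s x = fn M s x"
    and w: "wf_struc V i" "wf_struc V j"
    using a unfolding substr_def by auto
  have "\<forall>s. rel i s = rel j s \<inter> tuples V s (univ i)" using r1 r2 t by blast
  moreover have "\<forall>s \<in> FS V. \<forall>x \<in> tuples V s (univ i). fn i s x = fn j s x"
    using f1 f2 t by (simp add: subset_iff)
  ultimately show ?thesis unfolding substr_def using w u by blast
qed



lemma seqs_mono:
  assumes "|A| \<le>o |B|" shows "|seqs_lt mu A| \<le>o |seqs_lt mu B|"
proof -
  obtain g where g: "inj_on g A" "g ` A \<subseteq> B" using card_of_ordLeq[THEN iffD2, OF assms] by blast
  define h where "h = (\<lambda>p. (fst p, restrict (g \<circ> snd p) (Order_Relation.underS mu (fst p))))"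
  have "inj_on h (seqs_lt mu A)"
  proof (rule inj_onI)
    fix x y assume x: "x \<in> seqs_lt mu A" and y: "y \<in> seqs_lt mu A" and e: "h x = h y"
    obtain a f where xa: "x = (a, f)" by (cases x)
    obtain b f' where yb: "y = (b, f')" by (cases y)
    have ab: "a = b" using e unfolding xa yb h_def by simp
    have f: "f \<in> Order_Relation.underS mu a \<rightarrow>\<^sub>E A" using x unfolding xa seqs_lt_def by simp
    have f': "f' \<in> Order_Relation.underS mu a \<rightarrow>\<^sub>E A" using y unfolding yb ab seqs_lt_def by simp
    have rr: "restrict (g \<circ> f) (Order_Relation.underS mu a) = restrict (g \<circ> f') (Order_Relation.underS mu a)"
      using e unfolding xa yb ab h_def by simp
    have "f = f'"
    proof
      fix z show "f z = f' z"
      proof (cases "z \<in> Order_Relation.underS mu a")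
        case True
        have "g (f z) = g (f' z)" using fun_cong[OF rr, of z] restrict_apply'[OF True, of "g \<circ> f"] restrict_apply'[OF True, of "g \<circ> f'"] comp_apply by metis
        moreover have "f z \<in> A" "f' z \<in> A" using PiE_mem[OF f True] PiE_mem[OF f' True] by blast+
        ultimately show ?thesis using inj_onD[OF g(1)] by blast
      next
        case False then show ?thesis using PiE_arb[OF f False] PiE_arb[OF f' False] by simp
      qed
    qed
    then show "x = y" using xa yb ab by simp
  qed
  moreover have "h ` seqs_lt mu A \<subseteq> seqs_lt mu B"
  proof
    fix p assume "p \<in> h ` seqs_lt mu A"
    then obtain a f where p: "p = h (a, f)" and af: "a \<in> Field mu" "f \<in> Order_Relation.underS mu a \<rightarrow>\<^sub>E A"
      unfolding seqs_lt_def by blast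
    have "restrict (g \<circ> f) (Order_Relation.underS mu a) \<in> Order_Relation.underS mu a \<rightarrow>\<^sub>E B"
      using af(2) g(2) unfolding PiE_iff by force
    then show "p \<in> seqs_lt mu B" unfolding p h_def seqs_lt_def using af(1) by simp
  qed
  ultimately show ?thesis by (intro card_of_ordLeq[THEN iffD1] exI conjI)
qed

theorem theorem4p6:
  fixes V :: "('s, 'i) vocab" and mu :: "'m rel" and K :: "('a, 's, 'i) struc set"
    and le :: "('a, 's, 'i) struc \<Rightarrow> ('a, 's, 'i) struc \<Rightarrow> bool" and lam :: "'c rel"
    and Mp Np :: "('a, 's, 'i, 'c) pstruc"
  assumes "mu_AEC V mu K le lam"
    and "Mp \<in> Kplus V K le lam" and "Np \<in> Kplus V K le lam"
    and "substr_plus V lam Mp Np"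
  shows "le_plus V K le lam Mp Np"
proof -
  have reg: "regular_infinite mu" and abs: "mu_ary_abstract_class V mu K le"
    and coh: "coherence V K le" and ch: "chain_axioms V mu K le" and ls: "is_LS V mu K le lam"
    using assms(1) unfolding mu_AEC_def by simp_all
  have cmu: "Card_order mu" and imu: "infinite (Field mu)" using reg unfolding regular_infinite_def by simp_all
  have leK: "\<And>X Y. le X Y \<Longrightarrow> X \<in> K \<and> Y \<in> K"
    and lerefl: "\<And>X. X \<in> K \<Longrightarrow> le X X"
    and letrans: "\<And>X Y Z. le X Y \<Longrightarrow> le Y Z \<Longrightarrow> le X Z"
    and leanti: "\<And>X Y. le X Y \<Longrightarrow> le Y X \<Longrightarrow> X = Y"
    and lesub: "\<And>X Y. le X Y \<Longrightarrow> substr V X Y"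
    and Kwf: "\<And>X. X \<in> K \<Longrightarrow> wf_struc V X"
    using abs unfolding mu_ary_abstract_class_def by metis+
  have cohr: "\<And>X Y Z. X \<in> K \<Longrightarrow> Y \<in> K \<Longrightarrow> substr V X Y \<Longrightarrow> le Y Z \<Longrightarrow> le X Z \<Longrightarrow> le X Y"
    using coh unfolding coherence_def by metis
  have LST: "LST_cardinal V mu K le lam" using ls unfolding is_LS_def by blast
  have clam: "Card_order lam" and seql: "|seqs_lt mu (Field lam)| =o lam"
    and mul: "|RS V \<union> FS V| +c mu \<le>o lam"
    and lst: "\<forall>M \<in> K. \<forall>A \<subseteq> univ M. \<exists>M0. le M0 M \<and> A \<subseteq> univ M0 \<and>
        |univ M0| \<le>o |seqs_lt mu A| +c lam"
    using LST unfolding LST_cardinal_def by simp_all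
  have lamF: "lam \<le>o |Field lam|" using Card_order_iff_ordLeq_card_of[THEN iffD1, OF clam] .
  have muF: "|Field mu| \<le>o |Field lam|"
    using ordIso_ordLeq_trans[OF card_of_Field_ordIso[OF cmu] ordLeq_transitive[OF ordLeq_transitive[OF ordLeq_csum2[OF cmu] mul] lamF]] .
  have inf: "infinite (Field lam)" using card_of_ordLeq_infinite[OF muF imu] .
  obtain M PM where Mp: "Mp = (M, PM)" by (cases Mp)
  obtain N PN where Np: "Np = (N, PN)" by (cases Np)
  have MK: "M \<in> K" and PM: "PM = {a \<in> Field lam \<rightarrow>\<^sub>E univ M. le (restr V M (a ` Field lam)) M}"
    using assms(2) unfolding Mp Kplus_def by auto
  have NK: "N \<in> K" and PN: "PN = {a \<in> Field lam \<rightarrow>\<^sub>E univ N. le (restr V N (a ` Field lam)) N}"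
    using assms(3) unfolding Np Kplus_def by auto
  have MN: "substr V M N" and PMN: "PM = PN \<inter> (Field lam \<rightarrow>\<^sub>E univ M)"
    using assms(4) unfolding Mp Np substr_plus_def by auto
  have small: "\<exists>M0. le M0 M \<and> A \<subseteq> univ M0 \<and> |univ M0| \<le>o |Field lam|"
    if A: "A \<subseteq> univ M" "|A| \<le>o |Field lam|" for A
  proof -
    obtain M0 where M0: "le M0 M" "A \<subseteq> univ M0" "|univ M0| \<le>o |seqs_lt mu A| +c lam"
      using lst MK A(1) by blast
    have "|seqs_lt mu A| \<le>o lam"
      using ordLeq_ordIso_trans[OF seqs_mono[OF A(2)] seql] .
    then have "|seqs_lt mu A| +c lam =o lam"
      using csum_absorb2'[OF clam] inf unfolding cinfinite_def by blast
    then have "|univ M0| \<le>o |Field lam|"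
      using ordLeq_transitive[OF ordLeq_ordIso_trans[OF M0(3)] lamF] by blast
    then show ?thesis using M0 by blast
  qed
  define I where "I = {M0. le M0 M \<and> |univ M0| \<le>o |Field lam|}"
  have IK: "\<And>i. i \<in> I \<Longrightarrow> i \<in> K" unfolding I_def using leK by blast
  have md: "mu_directed mu I le"
    unfolding mu_directed_def
  proof (intro conjI ballI allI impI)
    fix i assume "i \<in> I" then show "le i i" using IK lerefl by blast
  next
    fix i j k assume "le i j" "le j k" then show "le i k" using letrans by blast
  next
    fix i j assume "le i j" "le j i" then show "i = j" using leanti by blast
  next
    fix X assume X: "X \<subseteq> I" "|X| <o mu"
    define A where "A = (\<Union>x \<in> X. univ x)"
    have XF: "|X| \<le>o |Field lam|"
      using ordLeq_transitive[OF ordLeq_ordIso_trans[OF ordLess_imp_ordLeq[OF X(2)]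
            ordIso_symmetric[OF card_of_Field_ordIso[OF cmu]]] muF] .
    have "|A| \<le>o |Field lam|" unfolding A_def
      using card_of_UNION_ordLeq_infinite[OF inf XF] X(1) unfolding I_def by blast
    moreover have "A \<subseteq> univ M" unfolding A_def using X(1) lesub unfolding I_def substr_def by blast
    ultimately obtain M0 where M0: "le M0 M" "A \<subseteq> univ M0" "|univ M0| \<le>o |Field lam|"
      using small by blast
    have "M0 \<in> I" unfolding I_def using M0 by blast
    moreover have "\<forall>i \<in> X. le i M0"
    proof
      fix i assume i: "i \<in> X"
      then have iI: "i \<in> I" using X(1) by blast
      then have liM: "le i M" unfolding I_def by blast
      have "univ i \<subseteq> univ M0" using i M0(2) unfolding A_def by blast
      then have "substr V i M0" using substr_between[OF lesub[OF liM] lesub[OF M0(1)]] by blast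
      then show "le i M0" using cohr[OF IK[OF iI] _ _ M0(1) liM] leK[OF M0(1)] by blast
    qed
    ultimately show "\<exists>j \<in> I. \<forall>i \<in> X. le i j" by blast
  qed
  have ds: "directed_system mu K le I le id"
    unfolding directed_system_def using md IK by simp
  have un: "is_union V I id M"
    unfolding is_union_def
  proof (intro conjI)
    show "wf_struc V M" using Kwf MK by blast
    show "\<forall>i\<in>I. substr V (id i) M" unfolding I_def using lesub by simp
    show "univ M = (\<Union>i\<in>I. univ (id i))"
    proof
      show "(\<Union>i\<in>I. univ (id i)) \<subseteq> univ M"
      proof (rule UN_least)
        fix i assume "i \<in> I"
        then have "le i M" unfolding I_def by blast
        then show "univ (id i) \<subseteq> univ M" using lesub[OF \<open>le i M\<close>] unfolding substr_def by simp
      qed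
    next
      show "univ M \<subseteq> (\<Union>i\<in>I. univ (id i))"
      proof
        fix x assume x: "x \<in> univ M"
        have "Field lam \<noteq> {}" using inf by auto
        then have "|{x}| \<le>o |Field lam|" by (rule card_of_singl_ordLeq)
        then obtain M0 where "le M0 M" "{x} \<subseteq> univ M0" "|univ M0| \<le>o |Field lam|"
          using small x by blast
        then show "x \<in> (\<Union>i\<in>I. univ (id i))" unfolding I_def by auto
      qed
    qed
  qed
  have iN: "le i N" if iI: "i \<in> I" for i
  proof -
    have liM: "le i M" and ci: "|univ i| \<le>o |Field lam|" using iI unfolding I_def by auto
    have siM: "substr V i M" using lesub[OF liM] .
    have ne: "univ i \<noteq> {}" using Kwf[OF IK[OF iI]] unfolding wf_struc_def by blast
    obtain g where g: "g ` Field lam = univ i" using card_of_ordLeq2[OF ne, THEN iffD2, OF ci] by blast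
    define a where "a = restrict g (Field lam)"
    have ai: "a ` Field lam = univ i" unfolding a_def using g by simp
    have uiM: "univ i \<subseteq> univ M" using siM unfolding substr_def by blast
    have aM: "a \<in> Field lam \<rightarrow>\<^sub>E univ M" unfolding a_def using g uiM by auto
    have "le (restr V M (a ` Field lam)) M" unfolding ai substr_restr[OF siM] using liM .
    then have "a \<in> PM" unfolding PM using aM by blast
    then have "a \<in> PN" using PMN by blast
    then have "le (restr V N (a ` Field lam)) N" unfolding PN by blast
    then show "le i N" unfolding ai restr_substr_eq[OF MN uiM] substr_restr[OF siM] .
  qed
  have "\<forall>N'. (\<forall>i \<in> I. le (id i) N') \<longrightarrow> le M N'"
    using ch[unfolded chain_axioms_def, rule_format, OF ds un] by blast
  then have "le M N" using iN by simp
  then show ?thesis unfolding le_plus_def using assms(2,3) Mp Np by simp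
qed

end
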